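(* Let $m\ge1$, $\Sigma=\{1,\ldots,m\}$, and let $\mu:\Sigma^*\to\Sigma^*$ be a morphism with $\mu(1)=1x$ for some $x\in\Sigma^+$, $|\mu(a)|>1$ for all $a\in\Sigma$, and frequency matrix $M$ non-singular with $|M^{-1}|<1$. Let $k$ be a positive integer and let $T_k=[\epsilon,\ldots,\epsilon,\vec 0,\ldots,\vec 0]$ be the $k$-template with $a_1=\cdots=a_{k+1}=\epsilon$ and $d_1=\cdots=d_{k-1}=\vec 0$. Then $T_k$ has only finitely many ancestors.
   Context: The Parikh map $\psi:\Sigma^*\to\mathbb{Z}^m$ is $\psi(w)=[|w|_1,\ldots,|w|_m]$ (row vector). The frequency matrix $M$ of $\mu$ has $M_{i,j}=|\mu(i)|_j$. For a real matrix $A$, $|A|=\sup_{v\neq0}|vA|/|v|$ with Euclidean norm on row vectors. A $k$-template is a $2k$-tuple $t=[a_1,\ldots,a_{k+1},d_1,\ldots,d_{k-1}]$ with each $a_i\in\{\epsilon,1,\ldots,m\}$ ($\epsilon$ the empty word) and each $d_i\in\mathbb{Z}^m$. Given $k$-templates $t_1=[a_1,\ldots,a_{k+1},d_1,\ldots,d_{k-1}]$ and $t_2=[A_1,\ldots,A_{k+1},D_1,\ldots,D_{k-1}]$, $t_2$ is a parent of $t_1$ if there are words $a_i',a_i''$ ($1\le i\le k+1$) with $\mu(A_i)=a_i'a_ia_i''$ for each $i$ and $\psi(a_{i+1}''a_{i+2}')-\psi(a_i''a_{i+1}')+D_iM=d_i$ for $1\le i\le k-1$. The ancestor relation is the transitive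 closure of the parent relation. *)

theory Defs
  imports "HOL-Analysis.Analysis"
begin

text \<open>The alphabet Sigma = {1..m} is modelled by a finite type 'a (m = CARD('a) >= 1);
words are lists; a morphism is given by its values on letters.\<close>

definition morph :: "('a \<Rightarrow> 'a list) \<Rightarrow> 'a list \<Rightarrow> 'a list" where
  "morph \<mu> w = concat (map \<mu> w)"

definition parikh :: "'a::finite list \<Rightarrow> int ^ 'a" where
  "parikh w = (\<chi> j. int (count_list w j))"

definition freq_matrix :: "('a::finite \<Rightarrow> 'a list) \<Rightarrow> int ^ 'a ^ 'a" where
  "freq_matrix \<mu> = (\<chi> i j. int (count_list (\<mu> i) j))"

text \<open>A template entry a_i in {epsilon, 1..m} is an 'a option (None = empty word).
A k-template is a pair (list of k+1 entries a_1..a_{k+1}, list of k-1 vectors d_1..d_{k-1}).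
Indices are 0-based in the lists.\<close>
type_synonym 'a template = "'a option list \<times> (int ^ 'a) list"

definition letter_word :: "'a option \<Rightarrow> 'a list" where
  "letter_word a = (case a of None \<Rightarrow> [] | Some c \<Rightarrow> [c])"

definition is_template :: "nat \<Rightarrow> 'a template \<Rightarrow> bool" where
  "is_template k t \<longleftrightarrow> length (fst t) = k + 1 \<and> length (snd t) = k - 1"

definition is_parent :: "('a::finite \<Rightarrow> 'a list) \<Rightarrow> nat \<Rightarrow> 'a template \<Rightarrow> 'a template \<Rightarrow> bool" where
  "is_parent \<mu> k t2 t1 \<longleftrightarrow> is_template k t1 \<and> is_template k t2 \<and>
     (\<exists>a' a'' :: nat \<Rightarrow> 'a list.
        (\<forall>i < k + 1. morph \<mu> (letter_word (fst t2 ! i)) = a' i @ letter_word (fst t1 ! i) @ a'' i) \<and>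
        (\<forall>i < k - 1. parikh (a'' (i+1) @ a' (i+2)) - parikh (a'' i @ a' (i+1))
                      + (snd t2 ! i) v* freq_matrix \<mu> = snd t1 ! i))"

definition ancestors :: "('a::finite \<Rightarrow> 'a list) \<Rightarrow> nat \<Rightarrow> 'a template \<Rightarrow> 'a template set" where
  "ancestors \<mu> k t = {t2. (t, t2) \<in> {(t1, t2). is_parent \<mu> k t2 t1}\<^sup>+}"

definition T_template :: "nat \<Rightarrow> ('a::finite) template" where
  "T_template k = (replicate (k + 1) None, replicate (k - 1) 0)"

end

theory Submission
  imports Defs
begin

definition rv :: "int ^ 'a \<Rightarrow> real ^ 'a" where
  "rv d = (\<chi> j. real_of_int (d $ j))"

lemma rv_mult: "rv (D v* (M :: int^'a::finite^'a::finite)) = rv D v* map_matrix real_of_int M"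
  unfolding rv_def vector_matrix_mult_def by (simp add: vec_eq_iff)

lemma rv_diff: "rv (a - b) = rv a - rv b"
  unfolding rv_def by (simp add: vec_eq_iff)

lemma rv_zero: "rv 0 = 0"
  unfolding rv_def by (simp add: vec_eq_iff)

lemma bl_vm: "bounded_linear (\<lambda>v::real^'n. v v* (A::real^'m^'n))"
proof -
  have "(\<lambda>v::real^'n. v v* A) = (*v) (transpose A)" by auto
  thus ?thesis by simp
qed

lemma morph_len:
  fixes \<mu> :: "'a::finite \<Rightarrow> 'a list"
  shows "length (morph \<mu> (letter_word x)) \<le> Max (range (\<lambda>a. length (\<mu> a)))"
  by (cases x) (auto simp: morph_def letter_word_def)

lemma parikh_comp: "0 \<le> parikh w $ j \<and> parikh w $ j \<le> int (length w)"
  unfolding parikh_def by (simp add: count_le_length)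

lemma norm_rv_bound:
  fixes c :: "int ^ 'a::finite"
  assumes "\<And>j. \<bar>c $ j\<bar> \<le> K"
  shows "norm (rv c) \<le> real CARD('a) * real_of_int K"
proof -
  have "norm (rv c) \<le> (\<Sum>j\<in>UNIV. \<bar>rv c $ j\<bar>)" by (rule norm_le_l1_cart)
  also have "\<dots> \<le> real (card (UNIV::'a set)) * real_of_int K"
    by (rule sum_bounded_above) (simp add: rv_def, metis assms of_int_abs of_int_le_iff)
  finally show ?thesis by simp
qed

lemma finite_int_vecs:
  "finite {D :: int ^ 'a::finite. \<forall>j. \<bar>D $ j\<bar> \<le> N}"
proof -
  have "{D :: int ^ 'a. \<forall>j. \<bar>D $ j\<bar> \<le> N} \<subseteq> vec_lambda ` (Pi UNIV (\<lambda>_. {-N..N}))"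
  proof
    fix D :: "int^'a" assume "D \<in> {D. \<forall>j. \<bar>D $ j\<bar> \<le> N}"
    hence "vec_nth D \<in> Pi UNIV (\<lambda>_. {-N..N})" unfolding Pi_iff atLeastAtMost_iff by (metis mem_Collect_eq abs_le_D1 abs_le_D2 minus_le_iff)
    thus "D \<in> vec_lambda ` (Pi UNIV (\<lambda>_. {-N..N}))"
      by (metis image_eqI vec_lambda_eta)
  qed
  moreover have "finite (Pi (UNIV::'a set) (\<lambda>_. {-N..N}))"
    using finite_PiE[of "UNIV::'a set" "\<lambda>_. {-N..N}"] by (simp add: PiE_UNIV_domain)
  ultimately show ?thesis by (meson finite_imageI finite_subset)
qed

theorem lemma4:
  fixes \<mu> :: "'a::finite \<Rightarrow> 'a list" and one :: 'a and k :: nat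
  assumes "\<exists>x. x \<noteq> [] \<and> \<mu> one = one # x"
    and "\<forall>a. length (\<mu> a) > 1"
    and "invertible (map_matrix real_of_int (freq_matrix \<mu>))"
    and "onorm (\<lambda>v::real^'a. v v* matrix_inv (map_matrix real_of_int (freq_matrix \<mu>))) < 1"
    and "k > 0"
  shows "finite (ancestors \<mu> k (T_template k))"
proof -
  define Mr where "Mr = map_matrix real_of_int (freq_matrix \<mu>)"
  define Mi where "Mi = matrix_inv Mr"
  define lam where "lam = onorm (\<lambda>v::real^'a. v v* Mi)"
  define L where "L = Max (range (\<lambda>a. length (\<mu> a)))"
  define C where "C = real CARD('a) * real_of_int (int (2*L))"
  define B where "B = C / (1 - lam)"
  have lam1: "lam < 1" using assms(4) by (simp add: lam_def Mi_def Mr_def)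
  have lam0: "0 \<le> lam" unfolding lam_def by (rule onorm_pos_le[OF bl_vm])
  have C0: "0 \<le> C" by (simp add: C_def)
  have B0: "0 \<le> B" using C0 lam1 by (simp add: B_def)
  have key: "lam * (B + C) \<le> B"
  proof -
    have "B = lam * B + C" using lam1 by (simp add: B_def field_simps)
    moreover have "lam * C \<le> C" using mult_left_le_one_le[OF C0 lam0] lam1 by linarith
    ultimately show ?thesis by (simp add: distrib_left)
  qed
  have MMi: "Mr ** Mi = mat 1"
    using assms(3) unfolding Mi_def Mr_def[symmetric] invertible_def matrix_inv_def
    by (metis (mono_tags, lifting) someI_ex)
  define P where "P = (\<lambda>t::'a template. is_template k t \<and> (\<forall>d\<in>set (snd t). norm (rv d) \<le> B))"
  have step: "P t2" if "is_parent \<mu> k t2 t1" "P t1" for t1 t2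
  proof -
    from that(1) obtain a' a'' :: "nat \<Rightarrow> 'a list" where
      T: "is_template k t1" "is_template k t2" and
      W: "\<forall>i < k + 1. morph \<mu> (letter_word (fst t2 ! i)) = a' i @ letter_word (fst t1 ! i) @ a'' i" and
      E: "\<forall>i < k - 1. parikh (a'' (i+1) @ a' (i+2)) - parikh (a'' i @ a' (i+1))
                      + (snd t2 ! i) v* freq_matrix \<mu> = snd t1 ! i"
      unfolding is_parent_def by blast
    have lens: "length (a' i) \<le> L \<and> length (a'' i) \<le> L" if "i < k+1" for i
    proof -
      have e: "morph \<mu> (letter_word (fst t2 ! i)) = a' i @ letter_word (fst t1 ! i) @ a'' i"
        using W that by blast
      have "length (morph \<mu> (letter_word (fst t2 ! i))) \<le> L"
        unfolding L_def by (rule morph_len)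
      hence "length (a' i) + length (letter_word (fst t1 ! i)) + length (a'' i) \<le> L"
        unfolding e by simp
      thus ?thesis by linarith
    qed
    have "norm (rv D) \<le> B" if Dset: "D \<in> set (snd t2)" for D
    proof -
      obtain i where i0: "i < length (snd t2)" "snd t2 ! i = D"
        using Dset by (auto simp: in_set_conv_nth)
      hence i: "i < k - 1" "D = snd t2 ! i" using T(2) by (auto simp: is_template_def)
      define d where "d = snd t1 ! i"
      have dB: "norm (rv d) \<le> B" using \<open>P t1\<close> T(1) i(1) unfolding P_def is_template_def d_def by auto
      define c where "c = parikh (a'' (i+1) @ a' (i+2)) - parikh (a'' i @ a' (i+1))"
      have DM: "D v* freq_matrix \<mu> = d - c" using E i unfolding c_def d_def by (auto simp: algebra_simps)
      have ii: "i < k+1" "i+1 < k+1" "i+2 < k+1" using i(1) by auto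
      have l1: "length (a'' (i+1) @ a' (i+2)) \<le> 2*L" using lens[OF ii(2)] lens[OF ii(3)] by simp
      have l2: "length (a'' i @ a' (i+1)) \<le> 2*L" using lens[OF ii(1)] lens[OF ii(2)] by simp
      have "\<bar>c $ j\<bar> \<le> int (2*L)" for j
        using parikh_comp[of "a'' (i+1) @ a' (i+2)" j] parikh_comp[of "a'' i @ a' (i+1)" j] l1 l2
        unfolding c_def by auto
      hence cC: "norm (rv c) \<le> C" unfolding C_def by (rule norm_rv_bound)
      have "rv D = (rv D v* Mr) v* Mi" by (simp add: vector_matrix_mul_assoc MMi)
      also have "rv D v* Mr = rv (d - c)" using DM rv_mult[of D "freq_matrix \<mu>"] by (simp add: Mr_def)
      finally have "norm (rv D) = norm (rv (d - c) v* Mi)" by simp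
      also have "\<dots> \<le> lam * norm (rv (d - c))" unfolding lam_def by (rule onorm[OF bl_vm])
      also have "\<dots> \<le> lam * (B + C)"
      proof -
        have "norm (rv (d - c)) \<le> norm (rv d) + norm (rv c)" by (simp add: rv_diff norm_triangle_ineq4)
        thus ?thesis using dB cC lam0 by (intro mult_left_mono) auto
      qed
      also have "\<dots> \<le> B" by (rule key)
      finally show ?thesis .
    qed
    thus ?thesis using T(2) unfolding P_def by auto
  qed
  have P0: "P (T_template k)"
    unfolding P_def T_template_def is_template_def using B0 by (auto simp: rv_zero)
  have all: "P t2" if "(t, t2) \<in> {(t1, t2). is_parent \<mu> k t2 t1}\<^sup>+" "P t" for t t2
    using that by (induction rule: trancl_induct) (auto intro: step)
  define N where "N = \<lceil>B\<rceil>"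
  define V where "V = {D :: int ^ 'a. \<forall>j. \<bar>D $ j\<bar> \<le> N}"
  have fV: "finite V" unfolding V_def by (rule finite_int_vecs)
  have sub: "ancestors \<mu> k (T_template k) \<subseteq>
      {As. set As \<subseteq> UNIV \<and> length As = k+1} \<times> {Ds. set Ds \<subseteq> V \<and> length Ds = k-1}"
  proof
    fix t assume "t \<in> ancestors \<mu> k (T_template k)"
    hence Pt: "P t" using all P0 unfolding ancestors_def by auto
    have "set (snd t) \<subseteq> V"
    proof
      fix D assume "D \<in> set (snd t)"
      hence "norm (rv D) \<le> B" using Pt unfolding P_def by auto
      hence "\<bar>D $ j\<bar> \<le> N" for j
        using component_le_norm_cart[of "rv D" j] unfolding rv_def N_def
        by (simp add: le_ceiling_iff)
      thus "D \<in> V" unfolding V_def by auto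
    qed
    thus "t \<in> {As. set As \<subseteq> UNIV \<and> length As = k+1} \<times> {Ds. set Ds \<subseteq> V \<and> length Ds = k-1}"
      using Pt unfolding P_def is_template_def by (cases t) auto
  qed
  show ?thesis
    by (rule finite_subset[OF sub]) (intro finite_cartesian_product finite_lists_length_eq fV; simp)
qed

end
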